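(* Let $(\mathcal X,d)$ be a clustering instance in a metric space $M$ and let $\gamma\ge 3$. Then the standard single-linkage algorithm on $(\mathcal X,d)$ outputs a tree $\mathcal T$ such that every $k$-clustering $\mathcal C^*=\{C_1^*,\dots,C_k^*\}$ of $\mathcal X$ that satisfies the $\gamma$-margin property (with centers $\mu_1,\dots,\mu_k\in M$) is a pruning of $\mathcal T$; i.e., for every $1\le i\le k$ there is a node $N_i$ of $\mathcal T$ with $C_i^*=N_i$.
   Context: Single linkage starts with all singletons of $\mathcal X$ and repeatedly merges the two current clusters $A,B$ minimizing $\min_{a\in A,b\in B}d(a,b)$ until one cluster remains; the tree $\mathcal T$ has as nodes all clusters formed (leaves are singletons, each merge creates a parent of the two merged nodes). A clustering with centers $\mu_1,\dots,\mu_k\in M$ is center-based if $x\in C_i\iff i=\arg\min_j d(x,\mu_j)$, and satisfies the $\gamma$-margin property if for all $i$, every $x\in C_i$, $y\in\mathcal X\setminus C_i$: $\gamma d(x,\mu_i)<d(y,\mu_i)$. *)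

theory Defs
  imports "HOL-Analysis.Analysis"
begin

definition linkage :: "'a::metric_space set \<Rightarrow> 'a set \<Rightarrow> real" where
  "linkage A B = Min {dist a b | a b. a \<in> A \<and> b \<in> B}"

text \<open>States of the single linkage algorithm on instance X:
  (P, T) where P is the current set of clusters and T the set of tree nodes
  created so far. Every possible tie-breaking is allowed.\<close>
inductive sl_state :: "'a::metric_space set \<Rightarrow> 'a set set \<Rightarrow> 'a set set \<Rightarrow> bool"
  for X :: "'a set" where
  init: "sl_state X ((\<lambda>x. {x}) ` X) ((\<lambda>x. {x}) ` X)"
| merge: "\<lbrakk> sl_state X P T; A \<in> P; B \<in> P; A \<noteq> B;
            \<forall>A'\<in>P. \<forall>B'\<in>P. A' \<noteq> B' \<longrightarrow> linkage A B \<le> linkage A' B' \<rbrakk>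
          \<Longrightarrow> sl_state X (insert (A \<union> B) (P - {A, B})) (insert (A \<union> B) T)"

definition single_linkage_output :: "'a::metric_space set \<Rightarrow> 'a set set \<Rightarrow> bool" where
  "single_linkage_output X T \<longleftrightarrow> (\<exists>P. sl_state X P T \<and> card P = 1)"

definition k_clustering :: "'a set \<Rightarrow> nat \<Rightarrow> (nat \<Rightarrow> 'a set) \<Rightarrow> bool" where
  "k_clustering X k C \<longleftrightarrow>
     (\<forall>i<k. C i \<noteq> {} \<and> C i \<subseteq> X) \<and>
     (\<forall>i<k. \<forall>j<k. i \<noteq> j \<longrightarrow> C i \<inter> C j = {}) \<and>
     (\<Union>i<k. C i) = X"

definition center_based :: "'a::metric_space set \<Rightarrow> nat \<Rightarrow> (nat \<Rightarrow> 'a set) \<Rightarrow> (nat \<Rightarrow> 'a) \<Rightarrow> bool" where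
  "center_based X k C \<mu> \<longleftrightarrow>
     (\<forall>x\<in>X. \<forall>i<k. x \<in> C i \<longleftrightarrow> (\<forall>j<k. j \<noteq> i \<longrightarrow> dist x (\<mu> i) < dist x (\<mu> j)))"

definition gamma_margin :: "real \<Rightarrow> 'a::metric_space set \<Rightarrow> nat \<Rightarrow> (nat \<Rightarrow> 'a set) \<Rightarrow> (nat \<Rightarrow> 'a) \<Rightarrow> bool" where
  "gamma_margin \<gamma> X k C \<mu> \<longleftrightarrow>
     (\<forall>i<k. \<forall>x\<in>C i. \<forall>y\<in>X - C i. \<gamma> * dist x (\<mu> i) < dist y (\<mu> i))"

end

theory Submission
  imports Defs
begin

lemma partition_inv:
  assumes "sl_state X P T"
  shows "\<Union>P = X \<and> (\<forall>A\<in>P. A \<noteq> {}) \<and> (\<forall>A\<in>P. \<forall>B\<in>P. A\<noteq>B \<longrightarrow> A\<inter>B={}) \<and> P \<subseteq> T"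
  using assms
proof (induction rule: sl_state.induct)
  case init
  then show ?case by auto
next
  case (merge P T A B)
  have iU: "\<Union>P = X" and ine: "\<forall>A\<in>P. A \<noteq> {}"
    and idj: "\<forall>A\<in>P. \<forall>B\<in>P. A\<noteq>B \<longrightarrow> A\<inter>B={}" and iT: "P \<subseteq> T"
    using merge.IH by blast+
  have u: "\<Union>(insert (A \<union> B) (P - {A, B})) = \<Union>P" using merge.hyps(2,3) by blast
  have d: "\<forall>D\<in>insert (A \<union> B) (P - {A, B}). \<forall>E\<in>insert (A \<union> B) (P - {A, B}). D\<noteq>E \<longrightarrow> D\<inter>E={}"
  proof (intro ballI impI)
    fix D E assume D: "D \<in> insert (A \<union> B) (P - {A, B})" and E: "E \<in> insert (A \<union> B) (P - {A, B})" and DE: "D \<noteq> E"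
    show "D \<inter> E = {}"
    proof (cases "D = A \<union> B")
      case True
      then have "E \<in> P" "E \<noteq> A" "E \<noteq> B" using E DE by auto
      then have "A \<inter> E = {}" "B \<inter> E = {}" using idj merge.hyps(2,3) by metis+
      then show ?thesis using True by blast
    next
      case F: False
      then have "D \<in> P" "D \<noteq> A" "D \<noteq> B" using D by auto
      show ?thesis
      proof (cases "E = A \<union> B")
        case True
        then have "A \<inter> D = {}" "B \<inter> D = {}" using \<open>D \<in> P\<close> \<open>D \<noteq> A\<close> \<open>D \<noteq> B\<close> idj merge.hyps(2,3) by metis+
        then show ?thesis using True by blast
      next
        case False
        then have "E \<in> P" using E by auto
        then show ?thesis using \<open>D \<in> P\<close> DE idj by blast
      qed
    qed
  qed
  have n: "\<forall>D\<in>insert (A \<union> B) (P - {A, B}). D \<noteq> {}" using ine merge.hyps(2) by blast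
  have t: "insert (A \<union> B) (P - {A, B}) \<subseteq> insert (A \<union> B) T" using iT by blast
  show ?case using u iU d n t by simp
qed

lemma linkage_le:
  assumes "finite A" "finite B" "a \<in> A" "b \<in> B"
  shows "linkage A B \<le> dist a b"
proof -
  have "{dist a b |a b. a \<in> A \<and> b \<in> B} = (\<lambda>(a,b). dist a b) ` (A \<times> B)" by auto
  hence fin: "finite {dist a b |a b. a \<in> A \<and> b \<in> B}" using assms by simp
  show ?thesis unfolding linkage_def using assms by (intro Min_le[OF fin]) auto
qed

lemma linkage_attained:
  assumes "finite A" "finite B" "A \<noteq> {}" "B \<noteq> {}"
  shows "\<exists>a\<in>A. \<exists>b\<in>B. linkage A B = dist a b"
proof -
  have eq: "{dist a b |a b. a \<in> A \<and> b \<in> B} = (\<lambda>(a,b). dist a b) ` (A \<times> B)" by auto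
  hence fin: "finite {dist a b |a b. a \<in> A \<and> b \<in> B}" using assms by simp
  have ne: "{dist a b |a b. a \<in> A \<and> b \<in> B} \<noteq> {}" using assms by auto
  have "linkage A B \<in> {dist a b |a b. a \<in> A \<and> b \<in> B}"
    unfolding linkage_def using Min_in[OF fin ne] .
  then show ?thesis by auto
qed

lemma linkage_commute: "linkage A B = linkage B A"
proof -
  have "{dist a b |a b. a \<in> A \<and> b \<in> B} = {dist a b |a b. a \<in> B \<and> b \<in> A}"
  proof (intro equalityI subsetI)
    fix x assume "x \<in> {dist a b |a b. a \<in> A \<and> b \<in> B}"
    then obtain a b where "x = dist a b" "a \<in> A" "b \<in> B" by blast
    then have "x = dist b a" "b \<in> B" "a \<in> A" by (auto simp: dist_commute)
    then show "x \<in> {dist a b |a b. a \<in> B \<and> b \<in> A}" by blast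
  next
    fix x assume "x \<in> {dist a b |a b. a \<in> B \<and> b \<in> A}"
    then obtain a b where "x = dist a b" "a \<in> B" "b \<in> A" by blast
    then have "x = dist b a" "b \<in> A" "a \<in> B" by (auto simp: dist_commute)
    then show "x \<in> {dist a b |a b. a \<in> A \<and> b \<in> B}" by blast
  qed
  then show ?thesis unfolding linkage_def by simp
qed

lemma cluster_inv:
  assumes "sl_state X P T" "finite X" "C \<subseteq> X"
    and cprop: "\<forall>a\<in>C. \<forall>a'\<in>C. \<forall>b\<in>X-C. dist a a' < dist a b"
  shows "C \<in> T \<or> (\<forall>A\<in>P. A \<inter> C \<noteq> {} \<longrightarrow> A \<subseteq> C)"
  using assms(1)
proof (induction rule: sl_state.induct)
  case init
  then show ?case by auto
next
  case (merge P T A B)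
  have pinv: "\<Union>P = X \<and> (\<forall>A\<in>P. A \<noteq> {}) \<and> (\<forall>A\<in>P. \<forall>B\<in>P. A\<noteq>B \<longrightarrow> A\<inter>B={}) \<and> P \<subseteq> T"
    using partition_inv[OF merge.hyps(1)] .
  have pU: "\<Union>P = X" and pne: "\<forall>A\<in>P. A \<noteq> {}" and pT: "P \<subseteq> T" using pinv by blast+
  show ?case
  proof (cases "C \<in> T")
    case True then show ?thesis by auto
  next
    case False
    with merge.IH have sub: "\<forall>D\<in>P. D \<inter> C \<noteq> {} \<longrightarrow> D \<subseteq> C" by auto
    have key: False if h: "A \<subseteq> C" "B \<inter> C = {}" "A \<inter> C \<noteq> {}" "A \<in> P" "B \<in> P" "A \<noteq> B"
      "\<forall>A'\<in>P. \<forall>B'\<in>P. A' \<noteq> B' \<longrightarrow> linkage A B \<le> linkage A' B'" for A B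
    proof -
      have "A \<in> T" using pT h(4) by blast
      then have "A \<noteq> C" using False by blast
      then obtain c where c: "c \<in> C" "c \<notin> A" using h by auto
      then obtain A' where A': "A' \<in> P" "c \<in> A'" using pU assms(3) by blast
      have "A' \<noteq> A" using c A' by auto
      have sx: "A \<subseteq> X" "B \<subseteq> X" "A' \<subseteq> X" using pU h(4,5) A'(1) by blast+
      have finA: "finite A" "finite B" "finite A'"
        using finite_subset[OF sx(1) assms(2)] finite_subset[OF sx(2) assms(2)] finite_subset[OF sx(3) assms(2)] by auto
      have ne: "A \<noteq> {}" "B \<noteq> {}" using pne h(4,5) by blast+
      obtain a0 b0 where ab: "a0 \<in> A" "b0 \<in> B" "linkage A B = dist a0 b0"
        using linkage_attained[OF finA(1,2) ne] by blast
      have "b0 \<in> X - C" using ab(2) h(2) sx(2) by blast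
      hence "dist a0 c < dist a0 b0" using cprop ab(1) h(1) c(1) by blast
      moreover have "linkage A A' \<le> dist a0 c" using linkage_le[OF finA(1,3) ab(1) A'(2)] .
      moreover have "linkage A B \<le> linkage A A'" using h(7)[rule_format, OF h(4) A'(1)] \<open>A' \<noteq> A\<close> by metis
      ultimately show False using ab by linarith
    qed
    have "\<forall>D\<in>insert (A \<union> B) (P - {A, B}). D \<inter> C \<noteq> {} \<longrightarrow> D \<subseteq> C"
    proof (intro ballI impI)
      fix D assume D: "D \<in> insert (A \<union> B) (P - {A, B})" "D \<inter> C \<noteq> {}"
      show "D \<subseteq> C"
      proof (cases "D = A \<union> B")
        case False then show ?thesis using D sub by auto
      next
        case True
        show ?thesis
        proof (cases "A \<inter> C \<noteq> {} \<and> B \<inter> C \<noteq> {}")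
          case True then show ?thesis using sub merge.hyps(2,3) \<open>D = A \<union> B\<close> by auto
        next
          case nb: False
          show ?thesis
          proof (cases "A \<inter> C \<noteq> {}")
            case True
            then have AC: "A \<subseteq> C" and BC: "B \<inter> C = {}" using sub merge.hyps(2) nb by auto
            have False by (rule key[OF AC BC True merge.hyps(2-5)])
            then show ?thesis by blast
          next
            case False
            then have BC: "B \<inter> C \<noteq> {}" using D \<open>D = A \<union> B\<close> by auto
            then have "B \<subseteq> C" using sub merge.hyps(3) by auto
            moreover have "\<forall>A'\<in>P. \<forall>B'\<in>P. A' \<noteq> B' \<longrightarrow> linkage B A \<le> linkage A' B'"
              using merge.hyps(5) linkage_commute[of B A] by simp
            moreover have "A \<inter> C = {}" using False by blast
            moreover have "B \<noteq> A" using merge.hyps(4) by blast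
            ultimately have False using key[of B A] BC merge.hyps(2,3) by blast
            then show ?thesis by blast
          qed
        qed
      qed
    qed
    then show ?thesis by auto
  qed
qed

theorem theorem7:
  fixes X :: "'a::metric_space set" and \<gamma> :: real and T :: "'a set set"
  assumes "finite X" and "X \<noteq> {}" and "\<gamma> \<ge> 3"
    and "single_linkage_output X T"
  shows "\<forall>k (C :: nat \<Rightarrow> 'a set) (\<mu> :: nat \<Rightarrow> 'a).
           k \<ge> 1 \<and> k_clustering X k C \<and> center_based X k C \<mu> \<and> gamma_margin \<gamma> X k C \<mu>
           \<longrightarrow> (\<forall>i<k. C i \<in> T)"
proof (intro allI impI)
  fix k C \<mu> i
  assume H: "k \<ge> 1 \<and> k_clustering X k C \<and> center_based X k C \<mu> \<and> gamma_margin \<gamma> X k C \<mu>"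
    and i: "i < k"
  have Cne: "C i \<noteq> {}" and CX: "C i \<subseteq> X" using H i unfolding k_clustering_def by auto
  have fin: "finite (C i)" using CX assms(1) finite_subset by auto
  have marg: "\<forall>x\<in>C i. \<forall>y\<in>X - C i. \<gamma> * dist x (\<mu> i) < dist y (\<mu> i)"
    using H i unfolding gamma_margin_def by auto
  define R where "R = Max ((\<lambda>x. dist x (\<mu> i)) ` C i)"
  have Rge: "\<And>x. x \<in> C i \<Longrightarrow> dist x (\<mu> i) \<le> R" unfolding R_def using fin by auto
  obtain x0 where x0: "x0 \<in> C i" "dist x0 (\<mu> i) = R"
  proof -
    have "R \<in> (\<lambda>x. dist x (\<mu> i)) ` C i" unfolding R_def using fin Cne by (intro Max_in) auto
    then show ?thesis using that by auto
  qed
  have R0: "R \<ge> 0" using x0 by auto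
  have cprop: "\<forall>a\<in>C i. \<forall>a'\<in>C i. \<forall>b\<in>X - C i. dist a a' < dist a b"
  proof (intro ballI)
    fix a a' b assume a: "a \<in> C i" and a': "a' \<in> C i" and b: "b \<in> X - C i"
    have "\<gamma> * R < dist b (\<mu> i)" using marg x0 b by auto
    moreover have "dist b (\<mu> i) \<le> dist a b + dist a (\<mu> i)"
      by (metis dist_commute dist_triangle)
    moreover have "dist a a' \<le> dist a (\<mu> i) + dist a' (\<mu> i)"
      by (metis dist_commute dist_triangle)
    moreover have "3 * R \<le> \<gamma> * R" using assms(3) R0 by (simp add: mult_right_mono)
    ultimately show "dist a a' < dist a b" using Rge[OF a] Rge[OF a'] by linarith
  qed
  obtain P where P: "sl_state X P T" "card P = 1"
    using assms(4) unfolding single_linkage_output_def by auto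
  have pinv: "\<Union>P = X \<and> P \<subseteq> T" using partition_inv[OF P(1)] by auto
  obtain A where PA: "P = {A}" using P(2) card_1_singletonE by blast
  have AX: "A = X" using pinv PA by auto
  have "C i \<in> T \<or> (\<forall>A\<in>P. A \<inter> C i \<noteq> {} \<longrightarrow> A \<subseteq> C i)"
    using cluster_inv[OF P(1) assms(1) CX cprop] .
  moreover have "X \<in> T" using pinv PA AX by auto
  ultimately show "C i \<in> T" using PA AX CX Cne by auto
qed

end
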